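(* Let $\gamma\in C^{2}(\mathbb{R})$ be either an odd or an even function which is convex on $(0,\infty)$ and satisfies: (i) $\gamma(0)=\gamma'(0)=0$; (ii) $\frac{\gamma''(t)}{\gamma'(t)}$ is decreasing on $(0,\infty)$; (iii) there is a constant $C_1>0$ with $\frac{t\gamma''(t)}{\gamma'(t)}\geq C_1$ for all $t\in(0,\infty)$; (iv) $\gamma''$ is monotone on $(0,\infty)$. Fix $x,y\in\mathbb{R}$, a real number $\omega>0$ and an integer $k\geq 0$, and for $z$ with $1\leq z-y<z-x\leq 2$ set $$\Upsilon(z):=\frac{\gamma(\omega 2^k (z-x))-\gamma(\omega 2^k(z-y))}{\omega 2^k\gamma'(\omega 2^k(z-x))-\omega 2^k\gamma'(\omega 2^k(z-y))}.$$ Then $\Upsilon$ is increasing on the set $\{z:1\leq z-y<z-x\leq 2\}$, and $\Upsilon(z)\leq \frac{2}{C_1}$ on this set, uniformly in $\omega$ and $k$. *)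

theory Defs
  imports "HOL-Analysis.Analysis"
begin

text \<open>The quotient Upsilon(z) of the paper, with scale a = omega * 2^k;
  g1 denotes the derivative of g.\<close>
definition Upsilon :: "(real \<Rightarrow> real) \<Rightarrow> (real \<Rightarrow> real) \<Rightarrow> real \<Rightarrow> nat \<Rightarrow> real \<Rightarrow> real \<Rightarrow> real \<Rightarrow> real"
  where "Upsilon g g1 \<omega> k x y z =
    (g (\<omega> * 2^k * (z - x)) - g (\<omega> * 2^k * (z - y))) /
    (\<omega> * 2^k * g1 (\<omega> * 2^k * (z - x)) - \<omega> * 2^k * g1 (\<omega> * 2^k * (z - y)))"

end

theory Submission
  imports Defs
begin

theorem lemma3p2:
  fixes \<gamma> \<gamma>' \<gamma>'' :: "real \<Rightarrow> real"
    and C1 \<omega> x y :: real and k :: nat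
  assumes d1: "\<And>t. (\<gamma> has_real_derivative \<gamma>' t) (at t)"
    and d2: "\<And>t. (\<gamma>' has_real_derivative \<gamma>'' t) (at t)"
    and cont2: "continuous_on UNIV \<gamma>''"
    and parity: "(\<forall>t. \<gamma> (- t) = - \<gamma> t) \<or> (\<forall>t. \<gamma> (- t) = \<gamma> t)"
    and cvx: "convex_on {0<..} \<gamma>"
    and i: "\<gamma> 0 = 0" "\<gamma>' 0 = 0"
    and ii: "\<And>s t. 0 < s \<Longrightarrow> s \<le> t \<Longrightarrow> \<gamma>'' t / \<gamma>' t \<le> \<gamma>'' s / \<gamma>' s"
    and C1pos: "C1 > 0"
    and iii: "\<And>t. 0 < t \<Longrightarrow> t * \<gamma>'' t / \<gamma>' t \<ge> C1"
    and iv: "mono_on {0<..} \<gamma>'' \<or> antimono_on {0<..} \<gamma>''"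
    and \<omega>pos: "\<omega> > 0"
  shows "mono_on {z. 1 \<le> z - y \<and> z - y < z - x \<and> z - x \<le> 2} (Upsilon \<gamma> \<gamma>' \<omega> k x y)
       \<and> (\<forall>z \<in> {z. 1 \<le> z - y \<and> z - y < z - x \<and> z - x \<le> 2}. Upsilon \<gamma> \<gamma>' \<omega> k x y z \<le> 2 / C1)"
proof -
  have g1mono: "\<gamma>' s \<le> \<gamma>' t" if "0 < s" "s < t" for s t
  proof -
    have A: "connected {0::real<..}" by simp
    have "\<gamma> t - \<gamma> s \<ge> \<gamma>' s * (t - s)"
      using that by (intro convex_on_imp_above_tangent[OF cvx A]) (auto simp: interior_open intro: has_field_derivative_at_within d1)
    moreover have "\<gamma> s - \<gamma> t \<ge> \<gamma>' t * (s - t)"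
      using that by (intro convex_on_imp_above_tangent[OF cvx A]) (auto simp: interior_open intro: has_field_derivative_at_within d1)
    ultimately have "(\<gamma>' s - \<gamma>' t) * (t - s) \<le> 0" by (simp add: algebra_simps)
    with that show ?thesis by (simp add: mult_le_0_iff)
  qed
  have g1nn: "\<gamma>' t \<ge> 0" if "t > 0" for t
  proof -
    have "isCont \<gamma>' 0" using d2 by (rule DERIV_isCont)
    then have "(\<gamma>' \<longlongrightarrow> \<gamma>' 0) (at_right 0)"
      by (simp add: isCont_def filterlim_at_split)
    moreover have "eventually (\<lambda>s. \<gamma>' s \<le> \<gamma>' t) (at_right 0)"
      using eventually_at_right_real[OF that] by eventually_elim (auto intro: g1mono)
    ultimately have "\<gamma>' 0 \<le> \<gamma>' t"
      by (intro tendsto_upperbound) auto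
    with i show ?thesis by simp
  qed
  have g1pos: "\<gamma>' t > 0" if "t > 0" for t
  proof -
    have "\<gamma>' t \<noteq> 0" using iii[OF that] C1pos by auto
    with g1nn[OF that] show ?thesis by simp
  qed
  have g2pos: "\<gamma>'' t > 0" if "t > 0" for t
  proof -
    have "t * \<gamma>'' t / \<gamma>' t > 0" using iii[OF that] C1pos by linarith
    with g1pos[OF that] that show ?thesis by (simp add: zero_less_divide_iff zero_less_mult_iff)
  qed
  have K1: "\<gamma> u - \<gamma> v > 0 \<and> \<gamma>' u - \<gamma>' v > 0" if "0 < v" "v < u" for u v
  proof -
    have "\<gamma> v < \<gamma> u"
      using that by (intro DERIV_pos_imp_increasing[OF that(2)]) (metis d1 g1pos less_le_trans)
    moreover have "\<gamma>' v < \<gamma>' u"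
      using that by (intro DERIV_pos_imp_increasing[OF that(2)]) (metis d2 g2pos less_le_trans)
    ultimately show ?thesis by simp
  qed
  have K2: "\<exists>\<xi>. v < \<xi> \<and> \<xi> < u \<and> (\<gamma> u - \<gamma> v) * \<gamma>'' \<xi> = (\<gamma>' u - \<gamma>' v) * \<gamma>' \<xi>"
    if "0 < v" "v < u" for u v
    using GMVT'[of v u \<gamma> \<gamma>' \<gamma>'' \<gamma>'] that d1 d2 DERIV_isCont by blast
  have Kb: "(\<gamma> u - \<gamma> v) \<le> u / C1 * (\<gamma>' u - \<gamma>' v)
          \<and> (\<gamma> u - \<gamma> v) \<le> \<gamma>' u / \<gamma>'' u * (\<gamma>' u - \<gamma>' v)"
    if vu: "0 < v" "v < u" for u v
  proof -
    obtain \<xi> where xi: "v < \<xi>" "\<xi> < u" "(\<gamma> u - \<gamma> v) * \<gamma>'' \<xi> = (\<gamma>' u - \<gamma>' v) * \<gamma>' \<xi>"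
      using K2[OF vu] by blast
    have xp: "\<xi> > 0" using xi vu by linarith
    have p1: "\<gamma>' \<xi> > 0" "\<gamma>'' \<xi> > 0" using g1pos g2pos xp by auto
    have p2: "\<gamma>' u > 0" "\<gamma>'' u > 0" using g1pos g2pos xp xi by auto
    have D: "\<gamma>' u - \<gamma>' v > 0" using K1 vu by blast
    have N: "\<gamma> u - \<gamma> v = (\<gamma>' u - \<gamma>' v) * (\<gamma>' \<xi> / \<gamma>'' \<xi>)"
      using xi(3) p1 by (simp add: field_simps)
    have r1: "\<gamma>' \<xi> / \<gamma>'' \<xi> \<le> u / C1"
    proof -
      have "C1 \<le> \<xi> * \<gamma>'' \<xi> / \<gamma>' \<xi>" using iii xp by blast
      then have "C1 * \<gamma>' \<xi> \<le> \<xi> * \<gamma>'' \<xi>" using p1 by (simp add: field_simps)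
      also have "\<dots> \<le> u * \<gamma>'' \<xi>" using xi p1 by (intro mult_right_mono) auto
      finally show ?thesis using p1 C1pos by (simp add: field_simps)
    qed
    have r2: "\<gamma>' \<xi> / \<gamma>'' \<xi> \<le> \<gamma>' u / \<gamma>'' u"
    proof -
      have "\<gamma>'' u / \<gamma>' u \<le> \<gamma>'' \<xi> / \<gamma>' \<xi>" using ii[of \<xi> u] xp xi by auto
      then have "\<gamma>'' u * \<gamma>' \<xi> \<le> \<gamma>'' \<xi> * \<gamma>' u" using p1 p2 by (simp add: field_simps)
      then show ?thesis using p1 p2 by (simp add: field_simps)
    qed
    have D': "\<gamma>' u - \<gamma>' v \<ge> 0" using D by simp
    show ?thesis unfolding N
      using mult_left_mono[OF r1 D'] mult_left_mono[OF r2 D'] by (simp only: mult.commute)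
  qed
  define a where "a = \<omega> * 2 ^ k"
  have apos: "a > 0" using \<omega>pos by (simp add: a_def)
  define S where "S = {z. 1 \<le> z - y \<and> z - y < z - x \<and> z - x \<le> 2}"
  have Ups: "Upsilon \<gamma> \<gamma>' \<omega> k x y z = (\<gamma> (a * (z - x)) - \<gamma> (a * (z - y))) /
      (a * \<gamma>' (a * (z - x)) - a * \<gamma>' (a * (z - y)))" for z
    by (simp add: Upsilon_def a_def)
  have uv: "0 < a * (z - y) \<and> a * (z - y) < a * (z - x)" if "z \<in> S" for z
    using that apos by (auto simp: S_def)
  have bound: "Upsilon \<gamma> \<gamma>' \<omega> k x y z \<le> 2 / C1" if "z \<in> S" for z
  proof -
    let ?u = "a * (z - x)" and ?v = "a * (z - y)"
    have b: "\<gamma> ?u - \<gamma> ?v \<le> ?u / C1 * (\<gamma>' ?u - \<gamma>' ?v)" using Kb uv[OF that] by blast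
    have D: "\<gamma>' ?u - \<gamma>' ?v > 0" using K1 uv[OF that] by blast
    have "?u / C1 \<le> 2 * a / C1" using that apos C1pos by (auto simp: S_def divide_right_mono)
    then have "\<gamma> ?u - \<gamma> ?v \<le> 2 * a / C1 * (\<gamma>' ?u - \<gamma>' ?v)"
      using b D by (meson mult_right_mono less_imp_le order_trans)
    then have "(\<gamma> ?u - \<gamma> ?v) / (a * (\<gamma>' ?u - \<gamma>' ?v)) \<le> 2 / C1"
      using D apos C1pos by (simp add: divide_le_eq field_simps)
    then show ?thesis unfolding Ups by (simp add: right_diff_distrib)
  qed
  have deriv: "\<exists>d. (Upsilon \<gamma> \<gamma>' \<omega> k x y has_real_derivative d) (at z) \<and> d \<ge> 0" if "z \<in> S" for z
  proof -
    let ?u = "a * (z - x)" and ?v = "a * (z - y)"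
    have hu: "((\<lambda>z. a * (z - x)) has_real_derivative a) (at z)"
      by (auto intro!: derivative_eq_intros)
    have hv: "((\<lambda>z. a * (z - y)) has_real_derivative a) (at z)"
      by (auto intro!: derivative_eq_intros)
    have f1: "((\<lambda>z. \<gamma> (a * (z - x)) - \<gamma> (a * (z - y))) has_real_derivative
        \<gamma>' ?u * a - \<gamma>' ?v * a) (at z)"
      by (intro DERIV_diff DERIV_chain2[OF d1] hu hv)
    have f2: "((\<lambda>z. a * \<gamma>' (a * (z - x)) - a * \<gamma>' (a * (z - y))) has_real_derivative
        a * (\<gamma>'' ?u * a) - a * (\<gamma>'' ?v * a)) (at z)"
      by (intro DERIV_diff DERIV_cmult DERIV_chain2[OF d2] hu hv)
    have D: "\<gamma>' ?u - \<gamma>' ?v > 0" using K1 uv[OF that] by blast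
    have N: "\<gamma> ?u - \<gamma> ?v > 0" using K1 uv[OF that] by blast
    have den: "a * \<gamma>' ?u - a * \<gamma>' ?v \<noteq> 0" using D apos by (simp add: right_diff_distrib[symmetric])
    have key: "(\<gamma> ?u - \<gamma> ?v) * (\<gamma>'' ?u - \<gamma>'' ?v) \<le> (\<gamma>' ?u - \<gamma>' ?v) * (\<gamma>' ?u - \<gamma>' ?v)"
    proof (cases "\<gamma>'' ?u - \<gamma>'' ?v \<le> 0")
      case True
      then have "(\<gamma> ?u - \<gamma> ?v) * (\<gamma>'' ?u - \<gamma>'' ?v) \<le> 0" using N by (simp add: mult_le_0_iff)
      then show ?thesis by (smt (verit) zero_le_square)
    next
      case False
      have vp: "?v > 0" and uvl: "?v < ?u" using uv[OF that] by auto
      have p2: "\<gamma>' ?u > 0" "\<gamma>'' ?u > 0" "\<gamma>' ?v > 0" using g1pos g2pos vp uvl by auto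
      have b: "\<gamma> ?u - \<gamma> ?v \<le> \<gamma>' ?u / \<gamma>'' ?u * (\<gamma>' ?u - \<gamma>' ?v)" using Kb vp uvl by blast
      have "\<gamma>'' ?u / \<gamma>' ?u \<le> \<gamma>'' ?v / \<gamma>' ?v" using ii vp uvl by auto
      then have c: "\<gamma>'' ?u * \<gamma>' ?v \<le> \<gamma>'' ?v * \<gamma>' ?u" using p2 by (simp add: field_simps)
      have e: "\<gamma>' ?u / \<gamma>'' ?u * (\<gamma>'' ?u - \<gamma>'' ?v) \<le> \<gamma>' ?u - \<gamma>' ?v"
        using c p2 by (simp add: field_simps)
      have "(\<gamma> ?u - \<gamma> ?v) * (\<gamma>'' ?u - \<gamma>'' ?v)
          \<le> \<gamma>' ?u / \<gamma>'' ?u * (\<gamma>' ?u - \<gamma>' ?v) * (\<gamma>'' ?u - \<gamma>'' ?v)"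
        using b False by (intro mult_right_mono) auto
      also have "\<dots> = (\<gamma>' ?u / \<gamma>'' ?u * (\<gamma>'' ?u - \<gamma>'' ?v)) * (\<gamma>' ?u - \<gamma>' ?v)" by simp
      also have "\<dots> \<le> (\<gamma>' ?u - \<gamma>' ?v) * (\<gamma>' ?u - \<gamma>' ?v)"
        using e D by (intro mult_right_mono) auto
      finally show ?thesis .
    qed
    have nn: "0 \<le> ((\<gamma>' ?u * a - \<gamma>' ?v * a) * (a * \<gamma>' ?u - a * \<gamma>' ?v) -
        (\<gamma> ?u - \<gamma> ?v) * (a * (\<gamma>'' ?u * a) - a * (\<gamma>'' ?v * a))) /
        ((a * \<gamma>' ?u - a * \<gamma>' ?v) * (a * \<gamma>' ?u - a * \<gamma>' ?v))"
    proof -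
      have "(\<gamma>' ?u * a - \<gamma>' ?v * a) * (a * \<gamma>' ?u - a * \<gamma>' ?v) -
        (\<gamma> ?u - \<gamma> ?v) * (a * (\<gamma>'' ?u * a) - a * (\<gamma>'' ?v * a))
        = (a * a) * ((\<gamma>' ?u - \<gamma>' ?v) * (\<gamma>' ?u - \<gamma>' ?v) - (\<gamma> ?u - \<gamma> ?v) * (\<gamma>'' ?u - \<gamma>'' ?v))"
        by (simp add: algebra_simps)
      moreover have "0 \<le> (a * a) * ((\<gamma>' ?u - \<gamma>' ?v) * (\<gamma>' ?u - \<gamma>' ?v) - (\<gamma> ?u - \<gamma> ?v) * (\<gamma>'' ?u - \<gamma>'' ?v))"
        using key by simp
      ultimately show ?thesis by simp
    qed
    have "(Upsilon \<gamma> \<gamma>' \<omega> k x y has_real_derivative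
        ((\<gamma>' ?u * a - \<gamma>' ?v * a) * (a * \<gamma>' ?u - a * \<gamma>' ?v) -
        (\<gamma> ?u - \<gamma> ?v) * (a * (\<gamma>'' ?u * a) - a * (\<gamma>'' ?v * a))) /
        ((a * \<gamma>' ?u - a * \<gamma>' ?v) * (a * \<gamma>' ?u - a * \<gamma>' ?v))) (at z)"
      unfolding Ups[abs_def] using DERIV_divide[OF f1 f2 den] by simp
    with nn show ?thesis by blast
  qed
  have mono: "mono_on S (Upsilon \<gamma> \<gamma>' \<omega> k x y)"
  proof (rule mono_onI)
    fix r s assume rs: "r \<in> S" "s \<in> S" "r \<le> s"
    show "Upsilon \<gamma> \<gamma>' \<omega> k x y r \<le> Upsilon \<gamma> \<gamma>' \<omega> k x y s"
    proof (rule DERIV_nonneg_imp_nondecreasing[OF rs(3)])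
      fix t assume "r \<le> t" "t \<le> s"
      then have "t \<in> S" using rs by (auto simp: S_def)
      then show "\<exists>d. (Upsilon \<gamma> \<gamma>' \<omega> k x y has_real_derivative d) (at t) \<and> d \<ge> 0" by (rule deriv)
    qed
  qed
  show ?thesis using mono bound unfolding S_def by blast
qed

end
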